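(* For every integer $k\ge 2$ there exists a constant $c_k$ depending only on $k$ such that the following holds: if $\Gamma$ is any set of configurations containing at least one configuration $(S,(T_1,T_2))$ with $|S|=k$ (i.e. a $(2,k)$-configuration), then for all positive integers $n,m$ the number $a(n,m,\Gamma)$ of $(n,m)$-elections on the candidate set $\{c_1,\ldots,c_m\}$ avoiding every configuration in $\Gamma$ satisfies $a(n,m,\Gamma)\le m!\cdot c_k^{(n-1)m}$.
   Context: An $(n,m)$-election $(C,\mathcal{P})$ is a set $C$ of $m$ candidates with an ordered $n$-tuple $\mathcal{P}=(V_1,\ldots,V_n)$ of total orders on $C$ (so there are $(m!)^n$ elections on a fixed candidate set; elections differing only in the order of votes are distinct). An $(l,k)$-configuration $(S,\mathcal{T})$ is a set $S$ with $|S|=k$ and a tuple $\mathcal{T}=(T_1,\ldots,T_l)$ of total orders on $S$. The election contains the configuration if there are injective maps $f:\{1,\ldots,l\}\to\{1,\ldots,n\}$ and $g:S\to C$ such that for all distinct $x,y\in S$ and all $i$, $T_i$ ranking $x$ above $y$ implies $V_{f(i)}$ ranks $g(x)$ above $g(y)$; otherwise it avoids the configuration. *)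

theory Defs
  imports Complex_Main
begin

text \<open>A total order on a set A is a relation r with linear_order_on A r;
  x is ranked above y in r iff (x, y) is in r (for distinct x, y).
  Candidates are c_1..c_m, represented by the naturals 0..m-1.\<close>

definition is_election :: "nat \<Rightarrow> nat \<Rightarrow> nat rel list \<Rightarrow> bool" where
  "is_election n m P \<longleftrightarrow> length P = n \<and> (\<forall>V\<in>set P. linear_order_on {0..<m} V)"

definition is_configuration :: "nat set \<times> nat rel list \<Rightarrow> bool" where
  "is_configuration ST \<longleftrightarrow> finite (fst ST) \<and> (\<forall>Ti\<in>set (snd ST). linear_order_on (fst ST) Ti)"

definition contains_config :: "nat \<Rightarrow> nat \<Rightarrow> nat rel list \<Rightarrow> nat set \<times> nat rel list \<Rightarrow> bool" where
  "contains_config n m P ST \<longleftrightarrow>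
     (\<exists>f g. inj_on f {0..<length (snd ST)} \<and> f ` {0..<length (snd ST)} \<subseteq> {0..<n}
        \<and> inj_on g (fst ST) \<and> g ` (fst ST) \<subseteq> {0..<m}
        \<and> (\<forall>i<length (snd ST). \<forall>x\<in>fst ST. \<forall>y\<in>fst ST.
              x \<noteq> y \<longrightarrow> (x, y) \<in> snd ST ! i \<longrightarrow> (g x, g y) \<in> P ! f i))"

definition avoiding_elections :: "nat \<Rightarrow> nat \<Rightarrow> (nat set \<times> nat rel list) set \<Rightarrow> nat rel list set" where
  "avoiding_elections n m \<Gamma> =
     {P. is_election n m P \<and> (\<forall>ST\<in>\<Gamma>. \<not> contains_config n m P ST)}"

end

theory Submission
  imports Defs "HOL-Combinatorics.Permutations"
begin

definition pcont :: "(nat \<times> nat) set \<Rightarrow> nat set \<Rightarrow> (nat \<Rightarrow> nat) \<Rightarrow> (nat \<Rightarrow> nat) \<Rightarrow> bool" where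
  "pcont A D \<rho> \<sigma> \<longleftrightarrow> (\<exists>\<phi>. (\<forall>d\<in>D. \<phi> d \<in> A)
     \<and> (\<forall>d\<in>D. \<forall>e\<in>D. \<rho> d < \<rho> e \<longrightarrow> fst (\<phi> d) < fst (\<phi> e))
     \<and> (\<forall>d\<in>D. \<forall>e\<in>D. \<sigma> d < \<sigma> e \<longrightarrow> snd (\<phi> d) < snd (\<phi> e)))"

definition blk :: "nat \<Rightarrow> (nat \<times> nat) set \<Rightarrow> (nat \<times> nat) set" where
  "blk s A = (\<lambda>p. (fst p div s, snd p div s)) ` A"

definition cell :: "nat \<Rightarrow> (nat \<times> nat) set \<Rightarrow> nat \<Rightarrow> nat \<Rightarrow> (nat \<times> nat) set" where
  "cell s A I J = {p\<in>A. fst p div s = I \<and> snd p div s = J}"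

lemma div_less_imp_less: "(a::nat) div s < b div s \<Longrightarrow> a < b"
  by (meson div_le_mono not_le)

lemma blk_pcont:
  assumes "pcont (blk s A) D \<rho> \<sigma>"
  shows "pcont A D \<rho> \<sigma>"
proof -
  obtain \<psi> where \<psi>: "\<forall>d\<in>D. \<psi> d \<in> blk s A"
     "\<forall>d\<in>D. \<forall>e\<in>D. \<rho> d < \<rho> e \<longrightarrow> fst (\<psi> d) < fst (\<psi> e)"
     "\<forall>d\<in>D. \<forall>e\<in>D. \<sigma> d < \<sigma> e \<longrightarrow> snd (\<psi> d) < snd (\<psi> e)"
    using assms unfolding pcont_def by blast
  have "\<forall>d\<in>D. \<exists>p. p \<in> A \<and> \<psi> d = (fst p div s, snd p div s)"
    using \<psi>(1) unfolding blk_def by blast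
  then obtain \<phi> where \<phi>: "\<forall>d\<in>D. \<phi> d \<in> A \<and> \<psi> d = (fst (\<phi> d) div s, snd (\<phi> d) div s)"
    by metis
  show ?thesis unfolding pcont_def
  proof (intro exI conjI ballI impI)
    show "\<phi> d \<in> A" if "d \<in> D" for d using \<phi> that by blast
    show "fst (\<phi> d) < fst (\<phi> e)" if "d \<in> D" "e \<in> D" "\<rho> d < \<rho> e" for d e
      using \<psi>(2) \<phi> that by (metis div_less_imp_less fst_conv)
    show "snd (\<phi> d) < snd (\<phi> e)" if "d \<in> D" "e \<in> D" "\<sigma> d < \<sigma> e" for d e
      using \<psi>(3) \<phi> that by (metis div_less_imp_less snd_conv)
  qed
qed

lemma div_eq_iff_range:
  assumes "(s::nat) > 0" shows "a div s = I \<longleftrightarrow> a \<in> {I*s..<I*s+s}"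
proof -
  have "a div s = I \<longleftrightarrow> I*s \<le> a \<and> a < I*s+s"
  proof
    assume h: "a div s = I"
    have "a = I * s + a mod s" using h div_mult_mod_eq[of a s] by simp
    moreover have "a mod s < s" using assms by simp
    ultimately show "I*s \<le> a \<and> a < I*s+s" by linarith
  next
    assume "I*s \<le> a \<and> a < I*s+s"
    then show "a div s = I" using assms by (intro div_nat_eqI) (auto simp: algebra_simps)
  qed
  then show ?thesis by simp
qed

lemma pigeon:
  assumes "finite Y" "g ` F \<subseteq> Y" "finite F" "card F > (k-1) * card Y"
  shows "\<exists>y\<in>Y. k \<le> card {x\<in>F. g x = y}"
proof (rule ccontr)
  assume "\<not> ?thesis"
  then have le: "\<And>y. y \<in> Y \<Longrightarrow> card {x\<in>F. g x = y} \<le> k - 1" by force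
  have "F = (\<Union>y\<in>Y. {x\<in>F. g x = y})" using assms(2) by blast
  then have "card F \<le> (\<Sum>y\<in>Y. card {x\<in>F. g x = y})"
    using card_UN_le[OF assms(1)] by metis
  also have "\<dots> \<le> card Y * (k - 1)" using sum_bounded_above[of Y "\<lambda>y. card {x\<in>F. g x = y}" "k-1"] le by simp
  finally show False using assms(4) by (simp add: mult.commute)
qed


lemma wide_bound:
  assumes av: "\<not> pcont A D \<rho> \<sigma>" and rk: "\<rho> ` D \<subseteq> {..<k}" "\<sigma> ` D \<subseteq> {..<k}"
    and s: "s > 0" and k: "k \<ge> 1"
    and F: "finite F" "\<forall>I\<in>F. k \<le> card (snd ` cell s A I J)"
  shows "card F \<le> (k-1) * (s choose k)"
proof (rule ccontr)
  assume "\<not> ?thesis"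
  then have big: "card F > (k-1) * (s choose k)" by simp
  define R where "R = {J*s..<J*s+s}"
  define Y where "Y = {C. C \<subseteq> R \<and> card C = k}"
  have cardY: "card Y = s choose k" unfolding Y_def R_def using n_subsets[of "{J*s..<J*s+s}" k] by simp
  have finY: "finite Y" unfolding Y_def by (rule finite_subset[of _ "Pow R"]) (auto simp: R_def)
  have subR: "snd ` cell s A I J \<subseteq> R" for I
  proof
    fix b assume "b \<in> snd ` cell s A I J"
    then have "b div s = J" unfolding cell_def by auto
    then show "b \<in> R" unfolding R_def using div_eq_iff_range[OF s] by blast
  qed
  define g where "g I = (SOME C. C \<subseteq> snd ` cell s A I J \<and> card C = k)" for I
  have g: "g I \<subseteq> snd ` cell s A I J \<and> card (g I) = k" if "I \<in> F" for I
  proof -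
    have "k \<le> card (snd ` cell s A I J)" using F(2) that by blast
    then have "\<exists>C. C \<subseteq> snd ` cell s A I J \<and> card C = k"
      using obtain_subset_with_card_n by metis
    then show ?thesis unfolding g_def by (rule someI_ex)
  qed
  have "g ` F \<subseteq> Y"
  proof
    fix C assume "C \<in> g ` F"
    then obtain I where "I \<in> F" "C = g I" by blast
    then show "C \<in> Y" unfolding Y_def using g[of I] subR[of I] by auto
  qed
  have "card F > (k-1) * card Y" using big cardY by simp
  from pigeon[OF finY \<open>g ` F \<subseteq> Y\<close> F(1) this] obtain C where C: "C \<in> Y" "k \<le> card {I\<in>F. g I = C}"
    by blast
  define F' where "F' = {I\<in>F. g I = C}"
  have finF': "finite F'" unfolding F'_def using F(1) by simp
  have "card C = k" using C(1) unfolding Y_def by simp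
  then have finC: "finite C" using k card_ge_0_finite by force
  define L where "L = sorted_list_of_set F'"
  define Lc where "Lc = sorted_list_of_set C"
  have lenL: "length L \<ge> k" unfolding L_def using C(2) length_sorted_list_of_set[of F'] unfolding F'_def by linarith
  have setL: "set L = F'" unfolding L_def using finF' by (rule set_sorted_list_of_set)
  have sL: "sorted_wrt (<) L" unfolding L_def by (rule strict_sorted_list_of_set)
  have lenLc: "length Lc = k" unfolding Lc_def using C(1) length_sorted_list_of_set[of C] unfolding Y_def by simp
  have setLc: "set Lc = C" unfolding Lc_def using finC by (rule set_sorted_list_of_set)
  have sLc: "sorted_wrt (<) Lc" unfolding Lc_def by (rule strict_sorted_list_of_set)
  define \<phi> where "\<phi> d = (SOME p. p \<in> cell s A (L ! \<rho> d) J \<and> snd p = Lc ! (\<sigma> d))" for d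
  have \<phi>: "\<phi> d \<in> cell s A (L ! \<rho> d) J \<and> snd (\<phi> d) = Lc ! (\<sigma> d)" if "d \<in> D" for d
  proof -
    have r: "\<rho> d < k" "\<sigma> d < k" using rk that by (simp_all add: image_subset_iff)
    then have "\<rho> d < length L" using lenL by linarith
    then have "L ! \<rho> d \<in> F'" using setL nth_mem by blast
    then have "L ! \<rho> d \<in> F" "g (L ! \<rho> d) = C" unfolding F'_def by auto
    then have "C \<subseteq> snd ` cell s A (L ! \<rho> d) J" using g[of "L ! \<rho> d"] by simp
    moreover have "Lc ! (\<sigma> d) \<in> C" using r(2) lenLc setLc nth_mem by blast
    ultimately obtain p where "p \<in> cell s A (L ! \<rho> d) J" "Lc ! (\<sigma> d) = snd p"
      by (meson imageE subsetD)
    then have "\<exists>p. p \<in> cell s A (L ! \<rho> d) J \<and> snd p = Lc ! (\<sigma> d)" by metis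
    then show ?thesis unfolding \<phi>_def by (rule someI_ex)
  qed
  have "pcont A D \<rho> \<sigma>" unfolding pcont_def
  proof (intro exI conjI ballI impI)
    show "\<phi> d \<in> A" if "d \<in> D" for d using \<phi>[OF that] unfolding cell_def by blast
    show "fst (\<phi> d) < fst (\<phi> e)" if "d \<in> D" "e \<in> D" "\<rho> d < \<rho> e" for d e
    proof -
      have "\<rho> e < k" using rk that by (simp add: image_subset_iff)
      then have "L ! \<rho> d < L ! \<rho> e" using sorted_wrt_nth_less[OF sL that(3)] lenL by simp
      moreover have "fst (\<phi> d) div s = L ! \<rho> d" "fst (\<phi> e) div s = L ! \<rho> e"
        using \<phi> that unfolding cell_def by auto
      ultimately show ?thesis by (metis div_less_imp_less)
    qed
    show "snd (\<phi> d) < snd (\<phi> e)" if "d \<in> D" "e \<in> D" "\<sigma> d < \<sigma> e" for d e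
    proof -
      have "\<sigma> e < k" using rk that by (simp add: image_subset_iff)
      then have "Lc ! \<sigma> d < Lc ! \<sigma> e" using sorted_wrt_nth_less[OF sLc that(3)] lenLc by simp
      then show ?thesis using \<phi> that by auto
    qed
  qed
  then show False using av by simp
qed


definition tr :: "(nat \<times> nat) set \<Rightarrow> (nat \<times> nat) set" where
  "tr A = (\<lambda>p. (snd p, fst p)) ` A"

lemma pcont_tr: assumes "pcont (tr A) D \<sigma> \<rho>" shows "pcont A D \<rho> \<sigma>"
proof -
  obtain \<psi> where \<psi>: "\<forall>d\<in>D. \<psi> d \<in> tr A"
     "\<forall>d\<in>D. \<forall>e\<in>D. \<sigma> d < \<sigma> e \<longrightarrow> fst (\<psi> d) < fst (\<psi> e)"
     "\<forall>d\<in>D. \<forall>e\<in>D. \<rho> d < \<rho> e \<longrightarrow> snd (\<psi> d) < snd (\<psi> e)"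
    using assms unfolding pcont_def by blast
  show ?thesis unfolding pcont_def
  proof (intro exI[of _ "\<lambda>d. (snd (\<psi> d), fst (\<psi> d))"] conjI ballI impI)
    show "(snd (\<psi> d), fst (\<psi> d)) \<in> A" if "d \<in> D" for d
      using \<psi>(1) that unfolding tr_def by force
  qed (use \<psi> in auto)
qed

lemma fst_cell_tr: "fst ` cell s A I J = snd ` cell s (tr A) J I"
  unfolding cell_def tr_def by force

lemma card_le_sq:
  assumes s: "s > 0" shows "card (cell s A I J) \<le> s * s"
proof -
  have "cell s A I J \<subseteq> {I*s..<I*s+s} \<times> {J*s..<J*s+s}"
    unfolding cell_def using div_eq_iff_range[OF s] by fastforce
  then have "card (cell s A I J) \<le> card ({I*s..<I*s+s} \<times> {J*s..<J*s+s})"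
    by (intro card_mono) auto
  then show ?thesis by (simp add: card_cartesian_product)
qed

lemma card_le_small:
  assumes "\<not> k \<le> card (snd ` cell s A I J)" "\<not> k \<le> card (fst ` cell s A I J)"
    and fin: "finite A"
  shows "card (cell s A I J) \<le> (k-1) * (k-1)"
proof -
  have fc: "finite (cell s A I J)" using fin unfolding cell_def by simp
  have "cell s A I J \<subseteq> fst ` cell s A I J \<times> snd ` cell s A I J" by force
  then have "card (cell s A I J) \<le> card (fst ` cell s A I J \<times> snd ` cell s A I J)"
    using fc by (intro card_mono) auto
  also have "\<dots> = card (fst ` cell s A I J) * card (snd ` cell s A I J)"
    by (simp add: card_cartesian_product)
  also have "\<dots> \<le> (k-1) * (k-1)" using assms(1,2) by (intro mult_le_mono) auto
  finally show ?thesis .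
qed

lemma wide_count:
  assumes av: "\<not> pcont A D \<rho> \<sigma>" and rk: "\<rho> ` D \<subseteq> {..<k}" "\<sigma> ` D \<subseteq> {..<k}"
    and s: "s > 0" and k: "k \<ge> 1"
  shows "card {b\<in>{..<N}\<times>{..<N}. k \<le> card (snd ` cell s A (fst b) (snd b))} \<le> N * ((k-1) * (s choose k))"
proof -
  let ?F = "\<lambda>J. {I\<in>{..<N}. k \<le> card (snd ` cell s A I J)}"
  have "{b\<in>{..<N}\<times>{..<N}. k \<le> card (snd ` cell s A (fst b) (snd b))} \<subseteq> (\<Union>J\<in>{..<N}. (\<lambda>I. (I,J)) ` ?F J)"
    by force
  then have "card {b\<in>{..<N}\<times>{..<N}. k \<le> card (snd ` cell s A (fst b) (snd b))} \<le> card (\<Union>J\<in>{..<N}. (\<lambda>I. (I,J)) ` ?F J)"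
    by (intro card_mono) auto
  also have "\<dots> \<le> (\<Sum>J\<in>{..<N}. card ((\<lambda>I. (I,J)) ` ?F J))" by (rule card_UN_le) simp
  also have "\<dots> \<le> (\<Sum>J\<in>{..<N}. (k-1) * (s choose k))"
  proof (rule sum_mono)
    fix J assume "J \<in> {..<N}"
    have "card ((\<lambda>I. (I,J)) ` ?F J) \<le> card (?F J)" by (rule card_image_le) simp
    also have "\<dots> \<le> (k-1) * (s choose k)"
      by (rule wide_bound[OF av rk s k]) auto
    finally show "card ((\<lambda>I. (I,J)) ` ?F J) \<le> (k-1) * (s choose k)" .
  qed
  also have "\<dots> = N * ((k-1) * (s choose k))" by simp
  finally show ?thesis .
qed


lemma arith_MT:
  fixes k N bb c s :: nat
  assumes k: "k \<ge> 1" and c: "c = 2*(k*k*k*k*k)*bb" and s: "s = k*k"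
  shows "(c*N)*((k-1)*(k-1)) + (2*(N*((k-1)*bb)))*(s*s) \<le> c*(s*N)"
proof -
  obtain q where q: "k = Suc q" using k by (cases k) auto
  show ?thesis unfolding q c s by (simp add: algebra_simps)
qed

lemma MT:
  fixes k :: nat
  assumes k: "k \<ge> 1" and rk: "\<rho> ` D \<subseteq> {..<k}" "\<sigma> ` D \<subseteq> {..<k}"
  shows "A \<subseteq> {..<(k*k)^j}\<times>{..<(k*k)^j} \<Longrightarrow> \<not> pcont A D \<rho> \<sigma>
     \<Longrightarrow> card A \<le> (2*(k*k*k*k*k)*((k*k) choose k)) * (k*k)^j"
proof (induction j arbitrary: A)
  case 0
  have bb: "(k*k) choose k > 0" using k by (intro zero_less_binomial) simp
  have "A \<subseteq> {(0,0)}" using 0 by auto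
  then have "card A \<le> 1" using card_mono[of "{(0::nat,0::nat)}" A] by simp
  moreover have "0 < 2*(k*k*k*k*k)" using k by simp
  then have "0 < 2*(k*k*k*k*k)*((k*k) choose k)" using bb by (rule mult_pos_pos)
  then have "1 \<le> 2*(k*k*k*k*k)*((k*k) choose k)" by (simp del: zero_less_binomial_iff mult_pos_pos)
  ultimately have "card A \<le> 2*(k*k*k*k*k)*((k*k) choose k)" by (rule order_trans)
  then show ?case by (simp only: power_0 mult_1_right)
next
  case (Suc j A)
  define s where "s = k*k"
  define bb where "bb = s choose k"
  define c where "c = 2*(k*k*k*k*k)*bb"
  define N where "N = s^j"
  have s: "s > 0" unfolding s_def using k by simp
  have Asub: "A \<subseteq> {..<s*N}\<times>{..<s*N}" using Suc.prems(1) unfolding s_def N_def by simp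
  have finA: "finite A" using Asub finite_subset by blast
  define B where "B = blk s A"
  have Bsub: "B \<subseteq> {..<N}\<times>{..<N}"
  proof
    fix b assume "b \<in> B"
    then obtain p where p: "p \<in> A" "b = (fst p div s, snd p div s)" unfolding B_def blk_def by blast
    then have "fst p < N * s" "snd p < N * s" using Asub by (auto simp: mult.commute)
    then have "fst p div s < N" "snd p div s < N" using less_mult_imp_div_less by blast+
    then show "b \<in> {..<N}\<times>{..<N}" using p(2) by simp
  qed
  have Bav: "\<not> pcont B D \<rho> \<sigma>"
  proof
    assume "pcont B D \<rho> \<sigma>"
    then have "pcont A D \<rho> \<sigma>" unfolding B_def by (rule blk_pcont)
    with Suc.prems(2) show False by simp
  qed
  have "B \<subseteq> {..<(k*k)^j}\<times>{..<(k*k)^j}" using Bsub unfolding N_def s_def .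
  note cB0 = Suc.IH[OF this Bav]
  have cB: "card B \<le> c * N" using cB0 by (simp only: c_def bb_def N_def s_def)
  define wide where "wide b \<longleftrightarrow> k \<le> card (snd ` cell s A (fst b) (snd b))" for b
  define tall where "tall b \<longleftrightarrow> k \<le> card (fst ` cell s A (fst b) (snd b))" for b
  define W where "W = {b\<in>B. wide b \<or> tall b}"
  have finB: "finite B" using Bsub finite_subset by blast
  define U1 where "U1 = (\<Union>b\<in>B-W. cell s A (fst b) (snd b))"
  define U2 where "U2 = (\<Union>b\<in>W. cell s A (fst b) (snd b))"
  have AU: "A \<subseteq> U1 \<union> U2"
  proof
    fix p assume p: "p \<in> A"
    define b where "b = (fst p div s, snd p div s)"
    have bB: "b \<in> B" using p unfolding B_def blk_def b_def by (rule imageI)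
    have pc: "p \<in> cell s A (fst b) (snd b)" using p unfolding cell_def b_def by simp
    show "p \<in> U1 \<union> U2"
    proof (cases "b \<in> W")
      case True
      then show ?thesis unfolding U2_def using pc by blast
    next
      case False
      then show ?thesis unfolding U1_def using pc bB by blast
    qed
  qed
  have cs: "cell s A I J \<subseteq> A" for I J unfolding cell_def by simp
  have "U1 \<subseteq> A" unfolding U1_def by (rule UN_least) (rule cs)
  moreover have "U2 \<subseteq> A" unfolding U2_def by (rule UN_least) (rule cs)
  ultimately have "U1 \<union> U2 \<subseteq> A" by (rule Un_least)
  then have "finite (U1 \<union> U2)" by (rule finite_subset[OF _ finA])
  then have "card A \<le> card (U1 \<union> U2)" using AU by (rule card_mono)
  also have "\<dots> \<le> card U1 + card U2" by (rule card_Un_le)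
  also have "\<dots> \<le> (\<Sum>b\<in>B-W. card (cell s A (fst b) (snd b))) + (\<Sum>b\<in>W. card (cell s A (fst b) (snd b)))"
    unfolding U1_def U2_def by (intro add_mono card_UN_le) (use finB in \<open>simp_all add: W_def\<close>)
  also have "\<dots> \<le> card (B-W) * ((k-1)*(k-1)) + card W * (s*s)"
  proof (rule add_mono)
    have "(\<Sum>b\<in>B-W. card (cell s A (fst b) (snd b))) \<le> of_nat (card (B-W)) * ((k-1)*(k-1))"
    proof (rule sum_bounded_above)
      fix b assume "b \<in> B - W"
      then have "\<not> wide b" "\<not> tall b" by (simp_all add: W_def)
      then have "\<not> k \<le> card (snd ` cell s A (fst b) (snd b))" "\<not> k \<le> card (fst ` cell s A (fst b) (snd b))"
        unfolding wide_def tall_def .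
      then show "card (cell s A (fst b) (snd b)) \<le> (k-1)*(k-1)"
        by (rule card_le_small[OF _ _ finA])
    qed
    then show "(\<Sum>b\<in>B-W. card (cell s A (fst b) (snd b))) \<le> card (B-W) * ((k-1)*(k-1))" by simp
  next
    have "(\<Sum>b\<in>W. card (cell s A (fst b) (snd b))) \<le> of_nat (card W) * (s*s)"
      by (rule sum_bounded_above) (rule card_le_sq[OF s])
    then show "(\<Sum>b\<in>W. card (cell s A (fst b) (snd b))) \<le> card W * (s*s)" by simp
  qed
  also have "\<dots> \<le> card B * ((k-1)*(k-1)) + card W * (s*s)"
  proof -
    have "card (B-W) \<le> card B" by (rule card_mono[OF finB]) blast
    then show ?thesis by (intro add_mono mult_le_mono1 le_refl)
  qed
  finally have cA: "card A \<le> card B * ((k-1)*(k-1)) + card W * (s*s)" .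
  define X where "X = {b\<in>{..<N}\<times>{..<N}. wide b}"
  define Y where "Y = {b\<in>{..<N}\<times>{..<N}. tall b}"
  have finXY: "finite (X \<union> Y)"
    by (rule finite_subset[of _ "{..<N}\<times>{..<N}"]) (auto simp: X_def Y_def)
  have "W \<subseteq> X \<union> Y"
    unfolding W_def X_def Y_def using Bsub by blast
  then have "card W \<le> card (X \<union> Y)" using finXY by (rule card_mono[rotated])
  also have "\<dots> \<le> card X + card Y" by (rule card_Un_le)
  finally have cW1: "card W \<le> card X + card Y" .
  have cX: "card X \<le> N * ((k-1) * bb)"
    unfolding X_def wide_def bb_def by (rule wide_count[OF Suc.prems(2) rk s k])
  have cY: "card Y \<le> N * ((k-1) * bb)"
  proof -
    have av': "\<not> pcont (tr A) D \<sigma> \<rho>" using Suc.prems(2) pcont_tr by blast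
    define Z where "Z = {b\<in>{..<N}\<times>{..<N}. k \<le> card (snd ` cell s (tr A) (fst b) (snd b))}"
    have finZ: "finite Z" by (rule finite_subset[of _ "{..<N}\<times>{..<N}"]) (auto simp: Z_def)
    have "Y \<subseteq> (\<lambda>p. (snd p, fst p)) ` Z"
    proof
      fix b assume "b \<in> Y"
      then have b: "fst b < N" "snd b < N" "k \<le> card (fst ` cell s A (fst b) (snd b))"
        unfolding Y_def tall_def by auto
      have "k \<le> card (snd ` cell s (tr A) (snd b) (fst b))" using b(3) unfolding fst_cell_tr by blast
      then have "(snd b, fst b) \<in> Z" unfolding Z_def using b by simp
      moreover have "b = (\<lambda>p. (snd p, fst p)) (snd b, fst b)" by simp
      ultimately show "b \<in> (\<lambda>p. (snd p, fst p)) ` Z" by (rule rev_image_eqI)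
    qed
    then have "card Y \<le> card ((\<lambda>p. (snd p, fst p)) ` Z)"
      using finZ by (intro card_mono) simp_all
    also have "\<dots> \<le> card Z" by (rule card_image_le[OF finZ])
    also have "\<dots> \<le> N * ((k-1) * bb)"
      unfolding bb_def Z_def by (rule wide_count[OF av' rk(2) rk(1) s k])
    finally show ?thesis .
  qed
  have cW: "card W \<le> 2 * (N * ((k-1) * bb))" using cW1 cX cY by linarith
  have "card A \<le> (c*N) * ((k-1)*(k-1)) + (2 * (N * ((k-1) * bb))) * (s*s)"
    using cA add_mono[OF mult_le_mono1[OF cB] mult_le_mono1[OF cW]] by (rule order_trans)
  also have "\<dots> \<le> c * (s * N)"
    by (rule arith_MT[OF k c_def s_def])
  finally show ?case by (simp only: c_def bb_def s_def N_def power_Suc)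
qed


definition AV :: "nat \<Rightarrow> nat set \<Rightarrow> (nat \<Rightarrow> nat) \<Rightarrow> (nat \<Rightarrow> nat) \<Rightarrow> (nat \<times> nat) set set" where
  "AV N D \<rho> \<sigma> = {A. A \<subseteq> {..<N}\<times>{..<N} \<and> \<not> pcont A D \<rho> \<sigma>}"

definition cells :: "nat \<Rightarrow> (nat \<times> nat) set \<Rightarrow> (nat \<times> nat) set" where
  "cells s B = {p. (fst p div s, snd p div s) \<in> B}"

lemma finite_AV: "finite (AV N D \<rho> \<sigma>)"
  by (rule finite_subset[of _ "Pow ({..<N}\<times>{..<N})"]) (auto simp: AV_def)

lemma blk_sub:
  assumes "A \<subseteq> {..<s*N}\<times>{..<s*N}" shows "blk s A \<subseteq> {..<N}\<times>{..<N}"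
proof
  fix b assume "b \<in> blk s A"
  then obtain p where p: "p \<in> A" "b = (fst p div s, snd p div s)" unfolding blk_def by blast
  then have "fst p < N * s" "snd p < N * s" using assms by (auto simp: mult.commute)
  then have "fst p div s < N" "snd p div s < N" using less_mult_imp_div_less by blast+
  then show "b \<in> {..<N}\<times>{..<N}" using p(2) by simp
qed

lemma cells_card:
  assumes s: "s > 0" and fin: "finite B"
  shows "finite (cells s B) \<and> card (cells s B) \<le> s*s*card B"
proof -
  define R where "R b = {fst b*s..<fst b*s+s}\<times>{snd b*s..<snd b*s+s}" for b :: "nat \<times> nat"
  have sub: "cells s B \<subseteq> (\<Union>b\<in>B. R b)"
  proof
    fix p assume "p \<in> cells s B"
    then have pB: "(fst p div s, snd p div s) \<in> B" unfolding cells_def by simp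
    have "fst p \<in> {(fst p div s)*s..<(fst p div s)*s+s}" using div_eq_iff_range[OF s] by blast
    moreover have "snd p \<in> {(snd p div s)*s..<(snd p div s)*s+s}" using div_eq_iff_range[OF s] by blast
    ultimately have "p \<in> R (fst p div s, snd p div s)" unfolding R_def by (simp add: mem_Times_iff)
    then show "p \<in> (\<Union>b\<in>B. R b)" using pB by blast
  qed
  have finU: "finite (\<Union>b\<in>B. R b)" using fin unfolding R_def by simp
  have "card (cells s B) \<le> card (\<Union>b\<in>B. R b)" by (rule card_mono[OF finU sub])
  also have "\<dots> \<le> (\<Sum>b\<in>B. card (R b))" by (rule card_UN_le[OF fin])
  also have "\<dots> = (\<Sum>b\<in>B. s*s)" unfolding R_def by (simp add: card_cartesian_product)
  also have "\<dots> = s*s*card B" by simp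
  finally show ?thesis using finite_subset[OF sub finU] by simp
qed

lemma klazar_step:
  assumes s: "s > 0" and M: "\<forall>B\<in>AV N D \<rho> \<sigma>. card B \<le> M"
  shows "card (AV (s*N) D \<rho> \<sigma>) \<le> card (AV N D \<rho> \<sigma>) * 2^(s*s*M)"
proof -
  have sub: "AV (s*N) D \<rho> \<sigma> \<subseteq> (\<Union>B\<in>AV N D \<rho> \<sigma>. Pow (cells s B))"
  proof
    fix A assume "A \<in> AV (s*N) D \<rho> \<sigma>"
    then have A: "A \<subseteq> {..<s*N}\<times>{..<s*N}" "\<not> pcont A D \<rho> \<sigma>" unfolding AV_def by auto
    have "\<not> pcont (blk s A) D \<rho> \<sigma>"
    proof
      assume "pcont (blk s A) D \<rho> \<sigma>"
      then have "pcont A D \<rho> \<sigma>" by (rule blk_pcont)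
      with A(2) show False by simp
    qed
    then have "blk s A \<in> AV N D \<rho> \<sigma>" unfolding AV_def using blk_sub[OF A(1)] by simp
    moreover have "A \<subseteq> cells s (blk s A)" unfolding cells_def blk_def by (auto intro: imageI)
    ultimately show "A \<in> (\<Union>B\<in>AV N D \<rho> \<sigma>. Pow (cells s B))" by blast
  qed
  have fc: "finite (cells s B) \<and> card (cells s B) \<le> s*s*M" if "B \<in> AV N D \<rho> \<sigma>" for B
  proof -
    have "finite B" using that unfolding AV_def by (auto intro: finite_subset)
    then have "finite (cells s B) \<and> card (cells s B) \<le> s*s*card B" by (rule cells_card[OF s])
    moreover have "card B \<le> M" using M that by blast
    ultimately show ?thesis by (meson le_trans mult_le_mono2)
  qed
  have finU: "finite (\<Union>B\<in>AV N D \<rho> \<sigma>. Pow (cells s B))" using fc finite_AV by simp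
  have "card (AV (s*N) D \<rho> \<sigma>) \<le> card (\<Union>B\<in>AV N D \<rho> \<sigma>. Pow (cells s B))"
    by (rule card_mono[OF finU sub])
  also have "\<dots> \<le> (\<Sum>B\<in>AV N D \<rho> \<sigma>. card (Pow (cells s B)))" by (rule card_UN_le[OF finite_AV])
  also have "\<dots> \<le> (\<Sum>B\<in>AV N D \<rho> \<sigma>. 2^(s*s*M))"
  proof (rule sum_mono)
    fix B assume "B \<in> AV N D \<rho> \<sigma>"
    then have "finite (cells s B)" "card (cells s B) \<le> s*s*M" using fc by auto
    then show "card (Pow (cells s B)) \<le> 2^(s*s*M)" by (simp add: card_Pow power_increasing)
  qed
  also have "\<dots> = card (AV N D \<rho> \<sigma>) * 2^(s*s*M)" by simp
  finally show ?thesis .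
qed

lemma klazar:
  fixes k :: nat
  assumes k: "k \<ge> 2" and rk: "\<rho> ` D \<subseteq> {..<k}" "\<sigma> ` D \<subseteq> {..<k}"
  shows "card (AV ((k*k)^j) D \<rho> \<sigma>) \<le> 2^(((k*k)*(k*k)*(2*(k*k*k*k*k)*((k*k) choose k))) * (k*k)^j)"
proof (induction j)
  case 0
  define K where "K = (k*k)*(k*k)*(2*(k*k*k*k*k)*((k*k) choose k))"
  have bb: "(k*k) choose k > 0" using k by (intro zero_less_binomial) simp
  have "0 < (k*k)*(k*k)*(2*(k*k*k*k*k))" using k by simp
  then have "0 < K" unfolding K_def using bb by (metis mult_pos_pos mult.assoc)
  have "AV 1 D \<rho> \<sigma> \<subseteq> Pow {(0,0)}" unfolding AV_def by auto
  then have "card (AV 1 D \<rho> \<sigma>) \<le> card (Pow {(0::nat,0::nat)})" by (intro card_mono) auto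
  also have "\<dots> = 2" by (simp add: card_Pow)
  also have "\<dots> \<le> 2^K" using \<open>0 < K\<close> by (metis One_nat_def Suc_leI power_increasing power_one_right zero_less_numeral less_imp_le one_le_numeral)
  finally show ?case unfolding K_def by simp
next
  case (Suc j)
  define s where "s = k*k"
  define c where "c = 2*(k*k*k*k*k)*((k*k) choose k)"
  define K where "K = s*s*c"
  have s: "s > 0" "s \<ge> 2" unfolding s_def using k by (simp, metis le_trans mult_le_mono one_le_numeral le_square nat_1_add_1 add_leD1)
  have M: "\<forall>B\<in>AV (s^j) D \<rho> \<sigma>. card B \<le> c * s^j"
  proof
    fix B assume "B \<in> AV (s^j) D \<rho> \<sigma>"
    then have "B \<subseteq> {..<(k*k)^j}\<times>{..<(k*k)^j}" "\<not> pcont B D \<rho> \<sigma>" unfolding AV_def s_def by auto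
    from MT[OF _ rk this] k show "card B \<le> c * s^j" unfolding c_def s_def by simp
  qed
  have "card (AV (s^Suc j) D \<rho> \<sigma>) = card (AV (s*s^j) D \<rho> \<sigma>)" by simp
  also have "\<dots> \<le> card (AV (s^j) D \<rho> \<sigma>) * 2^(s*s*(c*s^j))" by (rule klazar_step[OF s(1) M])
  also have "\<dots> \<le> 2^(K*s^j) * 2^(K*s^j)"
    using Suc.IH unfolding K_def s_def c_def by (simp add: mult.assoc)
  also have "\<dots> = 2^(2*(K*s^j))" by (simp add: power_add[symmetric])
  also have "\<dots> \<le> 2^(K*s^Suc j)"
  proof (rule power_increasing)
    have "2*(K*s^j) \<le> s*(K*s^j)" using s(2) by (rule mult_le_mono1)
    then show "2*(K*s^j) \<le> K*s^Suc j" by (simp add: algebra_simps)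
  qed simp
  finally show ?case unfolding K_def s_def c_def by simp
qed


definition rnk :: "nat rel \<Rightarrow> nat \<Rightarrow> nat" where
  "rnk V x = card {y. (x,y) \<in> V \<and> y \<noteq> x}"

lemma lo_facts:
  assumes "linear_order_on A V"
  shows "V \<subseteq> A \<times> A" "\<And>x. x \<in> A \<Longrightarrow> (x,x) \<in> V" "trans V" "antisym V"
    "\<And>x y. x \<in> A \<Longrightarrow> y \<in> A \<Longrightarrow> x \<noteq> y \<Longrightarrow> (x,y) \<in> V \<or> (y,x) \<in> V"
  using assms unfolding linear_order_on_def partial_order_on_def preorder_on_def refl_on_def total_on_def
  by auto

lemma rnk_set_sub:
  assumes "linear_order_on A V" shows "{y. (x,y) \<in> V \<and> y \<noteq> x} \<subseteq> A - {x}"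
  using lo_facts(1)[OF assms] by blast

lemma rnk_less:
  assumes lo: "linear_order_on A V" and fin: "finite A" and xy: "x \<noteq> y" "(x,y) \<in> V"
  shows "rnk V y < rnk V x"
proof -
  have fx: "finite {z. (x,z) \<in> V \<and> z \<noteq> x}" using rnk_set_sub[OF lo] fin finite_subset by blast
  have "{z. (y,z) \<in> V \<and> z \<noteq> y} \<subset> {z. (x,z) \<in> V \<and> z \<noteq> x}"
  proof
    show "{z. (y,z) \<in> V \<and> z \<noteq> y} \<subseteq> {z. (x,z) \<in> V \<and> z \<noteq> x}"
    proof
      fix z assume z: "z \<in> {z. (y,z) \<in> V \<and> z \<noteq> y}"
      then have "(x,z) \<in> V" using xy(2) lo_facts(3)[OF lo] unfolding trans_def by blast
      moreover have "z \<noteq> x"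
      proof
        assume "z = x"
        then have "(y,x) \<in> V" using z by simp
        then have "x = y" using xy(2) lo_facts(4)[OF lo] unfolding antisym_def by blast
        then show False using xy(1) by simp
      qed
      ultimately show "z \<in> {z. (x,z) \<in> V \<and> z \<noteq> x}" by simp
    qed
    show "{z. (y,z) \<in> V \<and> z \<noteq> y} \<noteq> {z. (x,z) \<in> V \<and> z \<noteq> x}"
    proof
      assume "{z. (y,z) \<in> V \<and> z \<noteq> y} = {z. (x,z) \<in> V \<and> z \<noteq> x}"
      moreover have "y \<in> {z. (x,z) \<in> V \<and> z \<noteq> x}" using xy by simp
      ultimately have "y \<in> {z. (y,z) \<in> V \<and> z \<noteq> y}" by simp
      then show False by simp
    qed
  qed
  then show ?thesis unfolding rnk_def using fx by (rule psubset_card_mono[rotated])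
qed

lemma rnk_bound:
  assumes lo: "linear_order_on A V" and fin: "finite A" and x: "x \<in> A"
  shows "rnk V x < card A"
proof -
  have "rnk V x \<le> card (A - {x})" unfolding rnk_def
    by (rule card_mono) (use fin rnk_set_sub[OF lo] in auto)
  also have "\<dots> < card A"
  proof -
    have "card A > 0" using fin x card_gt_0_iff by blast
    then show ?thesis using fin x by (simp add: card_Diff_singleton_if)
  qed
  finally show ?thesis .
qed

lemma rnk_rev:
  assumes lo: "linear_order_on A V" and fin: "finite A" and x: "x \<in> A" "y \<in> A"
    and r: "rnk V y < rnk V x"
  shows "(x,y) \<in> V"
proof (rule ccontr)
  assume n: "(x,y) \<notin> V"
  have "x \<noteq> y" using r by auto
  then have "(y,x) \<in> V" using n lo_facts(5)[OF lo x] by blast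
  then have "rnk V x < rnk V y" using rnk_less[OF lo fin] \<open>x \<noteq> y\<close> by metis
  then show False using r by simp
qed

lemma rnk_inj:
  assumes lo: "linear_order_on A V" and fin: "finite A"
  shows "inj_on (rnk V) A"
proof (rule inj_onI)
  fix x y assume xy: "x \<in> A" "y \<in> A" "rnk V x = rnk V y"
  show "x = y"
  proof (rule ccontr)
    assume "x \<noteq> y"
    then have "(x,y) \<in> V \<or> (y,x) \<in> V" using lo_facts(5)[OF lo xy(1,2)] by blast
    then show False using rnk_less[OF lo fin] \<open>x \<noteq> y\<close> xy(3) by (metis less_irrefl)
  qed
qed

lemma V_eq:
  assumes lo: "linear_order_on A V" and fin: "finite A"
  shows "V = {(x,y). x \<in> A \<and> y \<in> A \<and> rnk V y \<le> rnk V x}"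
proof
  show "V \<subseteq> {(x,y). x \<in> A \<and> y \<in> A \<and> rnk V y \<le> rnk V x}"
  proof
    fix p assume p: "p \<in> V"
    obtain x y where xy: "p = (x,y)" by (cases p)
    have "x \<in> A" "y \<in> A" using p xy lo_facts(1)[OF lo] by auto
    moreover have "rnk V y \<le> rnk V x"
    proof (cases "x = y")
      case False
      then show ?thesis using rnk_less[OF lo fin False] p xy by (simp add: less_imp_le)
    qed simp
    ultimately show "p \<in> {(x,y). x \<in> A \<and> y \<in> A \<and> rnk V y \<le> rnk V x}" using xy by simp
  qed
  show "{(x,y). x \<in> A \<and> y \<in> A \<and> rnk V y \<le> rnk V x} \<subseteq> V"
  proof
    fix p assume "p \<in> {(x,y). x \<in> A \<and> y \<in> A \<and> rnk V y \<le> rnk V x}"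
    then obtain x y where xy: "p = (x,y)" "x \<in> A" "y \<in> A" "rnk V y \<le> rnk V x" by blast
    show "p \<in> V"
    proof (cases "rnk V y = rnk V x")
      case True
      then have "x = y" using rnk_inj[OF lo fin] xy(2,3) inj_onD by metis
      then show ?thesis using xy lo_facts(2)[OF lo] by simp
    next
      case False
      then show ?thesis using rnk_rev[OF lo fin xy(2,3)] xy by simp
    qed
  qed
qed

lemma rnk_eq_imp_eq:
  assumes "linear_order_on A V" "linear_order_on A V'" "finite A" "\<forall>x\<in>A. rnk V x = rnk V' x"
  shows "V = V'"
proof -
  have "V = {(x,y). x \<in> A \<and> y \<in> A \<and> rnk V y \<le> rnk V x}" by (rule V_eq[OF assms(1,3)])
  also have "\<dots> = {(x,y). x \<in> A \<and> y \<in> A \<and> rnk V' y \<le> rnk V' x}" using assms(4) by auto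
  also have "\<dots> = V'" by (rule V_eq[OF assms(2,3), symmetric])
  finally show ?thesis .
qed

lemma card_lin_orders: "card {V. linear_order_on {0..<m} V} \<le> fact m"
proof -
  define \<pi> where "\<pi> V = (\<lambda>x. if x < m then rnk V x else x)" for V
  have perm: "\<pi> V permutes {0..<m}" if lo: "linear_order_on {0..<m} V" for V
  proof (rule bij_imp_permutes)
    have eq: "\<And>x. x \<in> {0..<m} \<Longrightarrow> \<pi> V x = rnk V x" unfolding \<pi>_def by simp
    have ri: "inj_on (rnk V) {0..<m}" by (rule rnk_inj[OF lo finite_atLeastLessThan])
    have inj: "inj_on (\<pi> V) {0..<m}"
    proof (rule inj_onI)
      fix x y assume xy: "x \<in> {0..<m}" "y \<in> {0..<m}" "\<pi> V x = \<pi> V y"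
      then have "rnk V x = rnk V y" using eq by metis
      then show "x = y" using inj_onD[OF ri _ xy(1,2)] by blast
    qed
    have im: "\<pi> V ` {0..<m} = rnk V ` {0..<m}" using eq by (rule image_cong[OF refl])
    have "rnk V ` {0..<m} \<subseteq> {0..<m}"
    proof
      fix y assume "y \<in> rnk V ` {0..<m}"
      then obtain x where "x \<in> {0..<m}" "y = rnk V x" by blast
      then show "y \<in> {0..<m}" using rnk_bound[OF lo finite_atLeastLessThan] by simp
    qed
    then have "\<pi> V ` {0..<m} \<subseteq> {0..<m}" using im by simp
    then have "\<pi> V ` {0..<m} = {0..<m}" using endo_inj_surj[OF finite_atLeastLessThan _ inj] by blast
    then show "bij_betw (\<pi> V) {0..<m} {0..<m}" using inj unfolding bij_betw_def by blast
    show "\<pi> V x = x" if "x \<notin> {0..<m}" for x using that unfolding \<pi>_def by simp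
  qed
  have "inj_on \<pi> {V. linear_order_on {0..<m} V}"
  proof (rule inj_onI)
    fix V V' assume V: "V \<in> {V. linear_order_on {0..<m} V}" "V' \<in> {V. linear_order_on {0..<m} V}"
      and e: "\<pi> V = \<pi> V'"
    have "\<forall>x\<in>{0..<m}. rnk V x = rnk V' x"
    proof
      fix x assume x: "x \<in> {0..<m}"
      have "\<pi> V x = \<pi> V' x" using e by simp
      then show "rnk V x = rnk V' x" using x unfolding \<pi>_def by simp
    qed
    then show "V = V'" using rnk_eq_imp_eq[of "{0..<m}" V V'] V by blast
  qed
  moreover have "\<pi> ` {V. linear_order_on {0..<m} V} \<subseteq> {p. p permutes {0..<m}}"
    using perm by blast
  moreover have "finite {p. p permutes {0..<m}}" by (rule finite_permutations) simp
  ultimately have "card {V. linear_order_on {0..<m} V} \<le> card {p. p permutes {0..<m}}"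
    by (rule card_inj_on_le)
  also have "\<dots> = fact m" by (rule card_permutations) simp_all
  finally show ?thesis .
qed


definition relp :: "nat \<Rightarrow> nat rel \<Rightarrow> nat rel \<Rightarrow> (nat \<times> nat) set" where
  "relp m V0 V = (\<lambda>x. (rnk V0 x, rnk V x)) ` {0..<m}"

lemma relp_sub:
  assumes "linear_order_on {0..<m} V0" "linear_order_on {0..<m} V"
  shows "relp m V0 V \<subseteq> {..<m}\<times>{..<m}"
proof
  fix p assume "p \<in> relp m V0 V"
  then obtain x where x: "x \<in> {0..<m}" "p = (rnk V0 x, rnk V x)" unfolding relp_def by blast
  have "rnk V0 x < m" using rnk_bound[OF assms(1) finite_atLeastLessThan x(1)] by simp
  moreover have "rnk V x < m" using rnk_bound[OF assms(2) finite_atLeastLessThan x(1)] by simp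
  ultimately show "p \<in> {..<m}\<times>{..<m}" using x(2) by simp
qed

lemma relp_inj:
  assumes lo0: "linear_order_on {0..<m} V0" and lo: "linear_order_on {0..<m} V" "linear_order_on {0..<m} V'"
    and e: "relp m V0 V = relp m V0 V'"
  shows "V = V'"
proof -
  have ri: "inj_on (rnk V0) {0..<m}" by (rule rnk_inj[OF lo0 finite_atLeastLessThan])
  have "\<forall>x\<in>{0..<m}. rnk V x = rnk V' x"
  proof
    fix x assume x: "x \<in> {0..<m}"
    have "(rnk V0 x, rnk V x) \<in> relp m V0 V" unfolding relp_def using x by (rule rev_image_eqI) simp
    then have "(rnk V0 x, rnk V x) \<in> relp m V0 V'" using e by simp
    then obtain x' where x': "x' \<in> {0..<m}" "(rnk V0 x, rnk V x) = (rnk V0 x', rnk V' x')"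
      unfolding relp_def by blast
    then have "x = x'" using inj_onD[OF ri _ x x'(1)] by simp
    then show "rnk V x = rnk V' x" using x' by simp
  qed
  then show ?thesis by (rule rnk_eq_imp_eq[OF lo finite_atLeastLessThan])
qed

lemma pcont_contains:
  assumes P: "is_election n m P" and j: "0 < j" "j < n"
    and lo1: "linear_order_on S T1" and lo2: "linear_order_on S T2" and finS: "finite S"
    and pc: "pcont (relp m (P!0) (P!j)) S (rnk T1) (rnk T2)"
  shows "contains_config n m P (S,[T1,T2])"
proof -
  have len: "length P = n" using P unfolding is_election_def by simp
  have lo0: "linear_order_on {0..<m} (P!0)" using P j len unfolding is_election_def by (metis nth_mem order.strict_trans)
  have loj: "linear_order_on {0..<m} (P!j)" using P j len unfolding is_election_def by (metis nth_mem)
  obtain \<phi> where \<phi>: "\<forall>d\<in>S. \<phi> d \<in> relp m (P!0) (P!j)"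
     "\<forall>d\<in>S. \<forall>e\<in>S. rnk T1 d < rnk T1 e \<longrightarrow> fst (\<phi> d) < fst (\<phi> e)"
     "\<forall>d\<in>S. \<forall>e\<in>S. rnk T2 d < rnk T2 e \<longrightarrow> snd (\<phi> d) < snd (\<phi> e)"
    using pc unfolding pcont_def by blast
  have "\<forall>d\<in>S. \<exists>x. x \<in> {0..<m} \<and> \<phi> d = (rnk (P!0) x, rnk (P!j) x)"
    using \<phi>(1) unfolding relp_def by blast
  then obtain g where g: "\<forall>d\<in>S. g d \<in> {0..<m} \<and> \<phi> d = (rnk (P!0) (g d), rnk (P!j) (g d))"
    by metis
  define f where "f i = (if i = 0 then 0 else j)" for i :: nat
  have A1: "inj_on f {0..<2}" unfolding f_def inj_on_def using j by simp
  have A2: "f ` {0..<2} \<subseteq> {0..<n}" unfolding f_def using j by auto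
  have A4: "g ` S \<subseteq> {0..<m}" using g by auto
  have A3: "inj_on g S"
  proof (rule inj_onI)
    fix d e assume de': "d \<in> S" "e \<in> S" and de3: "g d = g e"
    have eq: "\<phi> d = \<phi> e" using g de' de3 by metis
    show "d = e"
    proof (rule ccontr)
      assume "d \<noteq> e"
      then have "(d,e) \<in> T1 \<or> (e,d) \<in> T1" using lo_facts(5)[OF lo1 de'] by blast
      then have "rnk T1 e < rnk T1 d \<or> rnk T1 d < rnk T1 e"
        using rnk_less[OF lo1 finS] \<open>d \<noteq> e\<close> by metis
      then have "fst (\<phi> e) < fst (\<phi> d) \<or> fst (\<phi> d) < fst (\<phi> e)" using \<phi>(2) de' by blast
      then show False using eq by simp
    qed
  qed
  have A5: "\<forall>i<2. \<forall>x\<in>S. \<forall>y\<in>S. x \<noteq> y \<longrightarrow> (x, y) \<in> [T1, T2] ! i \<longrightarrow> (g x, g y) \<in> P ! f i"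
  proof (intro allI impI ballI)
    fix i x y assume i: "i < (2::nat)" and xS: "x \<in> S" "y \<in> S" and xy: "x \<noteq> y" "(x, y) \<in> [T1, T2] ! i"
    have gx: "g x \<in> {0..<m}" "g y \<in> {0..<m}" using g xS by auto
    have gx2: "\<phi> x = (rnk (P!0) (g x), rnk (P!j) (g x))" "\<phi> y = (rnk (P!0) (g y), rnk (P!j) (g y))"
      using g xS by blast+
    have i2: "i = 0 \<or> i = 1" using i by auto
    then show "(g x, g y) \<in> P ! f i"
    proof
      assume i0: "i = 0"
      then have "(x,y) \<in> T1" using xy by simp
      then have "rnk T1 y < rnk T1 x" using rnk_less[OF lo1 finS xy(1)] by blast
      then have "fst (\<phi> y) < fst (\<phi> x)" using \<phi>(2) xS by blast
      then have "rnk (P!0) (g y) < rnk (P!0) (g x)" using gx2 by simp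
      then have "(g x, g y) \<in> P!0" using rnk_rev[OF lo0 finite_atLeastLessThan gx] by blast
      then show ?thesis using i0 unfolding f_def by simp
    next
      assume i1: "i = 1"
      then have "(x,y) \<in> T2" using xy by simp
      then have "rnk T2 y < rnk T2 x" using rnk_less[OF lo2 finS xy(1)] by blast
      then have "snd (\<phi> y) < snd (\<phi> x)" using \<phi>(3) xS by blast
      then have "rnk (P!j) (g y) < rnk (P!j) (g x)" using gx2 by simp
      then have "(g x, g y) \<in> P!j" using rnk_rev[OF loj finite_atLeastLessThan gx] by blast
      then show ?thesis using i1 unfolding f_def by simp
    qed
  qed
  show ?thesis unfolding contains_config_def
    by (rule exI[of _ f], rule exI[of _ g]) (use A1 A2 A3 A4 A5 in \<open>simp add: numeral_2_eq_2\<close>)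
qed


lemma exists_pow:
  fixes s m :: nat
  assumes s: "s \<ge> 2" and m: "m \<ge> 1"
  shows "\<exists>j. m \<le> s^j \<and> s^j \<le> s*m"
proof -
  have ex: "\<exists>j. m \<le> s^j"
  proof -
    have "m < 2^m" by (rule less_exp)
    also have "\<dots> \<le> s^m" using s by (rule power_mono) simp
    finally show ?thesis by (intro exI[of _ m]) simp
  qed
  define j where "j = (LEAST j. m \<le> s^j)"
  have j1: "m \<le> s^j" unfolding j_def using ex by (rule LeastI_ex)
  show ?thesis
  proof (cases j)
    case 0
    then show ?thesis using j1 s m by (intro exI[of _ j]) simp
  next
    case (Suc i)
    have "\<not> m \<le> s^i" using not_less_Least[of i "\<lambda>j. m \<le> s^j"] Suc unfolding j_def by simp
    then have "s^i \<le> m" by simp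
    then have "s^j \<le> s*m" using Suc by simp
    then show ?thesis using j1 by blast
  qed
qed

definition KK :: "nat \<Rightarrow> nat" where
  "KK k = (k*k)*(k*k)*(2*(k*k*k*k*k)*((k*k) choose k))"

lemma count_elections:
  fixes k :: nat
  assumes k: "k \<ge> 2" and lo1: "linear_order_on S T1" and lo2: "linear_order_on S T2"
    and finS: "finite S" and cS: "card S = k" and n: "n > 0" and m: "m > 0"
    and X: "\<forall>P\<in>X. is_election n m P \<and> \<not> contains_config n m P (S,[T1,T2])"
  shows "card X \<le> fact m * (2^(KK k*(k*k)))^((n-1)*m)"
proof -
  define \<rho> where "\<rho> = rnk T1"
  define \<sigma> where "\<sigma> = rnk T2"
  have r1: "\<rho> ` S \<subseteq> {..<k}"
  proof
    fix y assume "y \<in> \<rho> ` S"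
    then obtain x where "x \<in> S" "y = \<rho> x" by blast
    then show "y \<in> {..<k}" using rnk_bound[OF lo1 finS] cS unfolding \<rho>_def by simp
  qed
  have r2: "\<sigma> ` S \<subseteq> {..<k}"
  proof
    fix y assume "y \<in> \<sigma> ` S"
    then obtain x where "x \<in> S" "y = \<sigma> x" by blast
    then show "y \<in> {..<k}" using rnk_bound[OF lo2 finS] cS unfolding \<sigma>_def by simp
  qed
  define L where "L = {V. linear_order_on {0..<m} V}"
  define Q where "Q = AV m S \<rho> \<sigma>"
  have s2: "k*k \<ge> 2" using k by (metis le_trans mult_le_mono one_le_numeral le_square nat_1_add_1 add_leD1)
  have m1: "m \<ge> 1" using m by simp
  obtain j where j: "m \<le> (k*k)^j" "(k*k)^j \<le> (k*k)*m" using exists_pow[OF s2 m1] by blast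
  have "Q \<subseteq> AV ((k*k)^j) S \<rho> \<sigma>" unfolding Q_def AV_def using j(1) by auto
  then have "card Q \<le> card (AV ((k*k)^j) S \<rho> \<sigma>)" by (rule card_mono[OF finite_AV])
  also have "\<dots> \<le> 2^(KK k * (k*k)^j)" unfolding KK_def by (rule klazar[OF k r1 r2])
  also have "\<dots> \<le> 2^(KK k * ((k*k)*m))" using j(2) by (intro power_increasing mult_le_mono2) simp_all
  also have "\<dots> = (2^(KK k*(k*k)))^m" by (simp add: power_mult mult.assoc)
  finally have cQ: "card Q \<le> (2^(KK k*(k*k)))^m" .
  have finQ: "finite Q" unfolding Q_def by (rule finite_AV)
  have finL: "finite L" unfolding L_def
    by (rule finite_subset[of _ "Pow ({0..<m}\<times>{0..<m})"]) (use lo_facts(1) in blast, simp)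
  define LS where "LS = {xs. set xs \<subseteq> Q \<and> length xs = n-1}"
  define \<Phi> where "\<Phi> P = (hd P, map (relp m (hd P)) (tl P))" for P
  have Pfacts: "P \<noteq> [] \<and> length P = n \<and> (\<forall>V\<in>set P. linear_order_on {0..<m} V) \<and> hd P = P!0" if "P \<in> X" for P
  proof -
    have "length P = n" "\<forall>V\<in>set P. linear_order_on {0..<m} V" using X that unfolding is_election_def by auto
    moreover have "P \<noteq> []" using \<open>length P = n\<close> n by auto
    ultimately show ?thesis using hd_conv_nth by blast
  qed
  have img: "\<Phi> ` X \<subseteq> L \<times> LS"
  proof
    fix z assume "z \<in> \<Phi> ` X"
    then obtain P where P: "P \<in> X" "z = \<Phi> P" by blast
    have PF: "P \<noteq> []" "length P = n" "\<forall>V\<in>set P. linear_order_on {0..<m} V" "hd P = P!0"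
      using Pfacts[OF P(1)] by auto
    have el: "is_election n m P" "\<not> contains_config n m P (S,[T1,T2])" using X P(1) by auto
    have lo0: "linear_order_on {0..<m} (P!0)" using PF by (metis nth_mem length_greater_0_conv)
    have "hd P \<in> L" unfolding L_def using lo0 PF(4) by simp
    moreover have "set (map (relp m (hd P)) (tl P)) \<subseteq> Q"
    proof
      fix y assume "y \<in> set (map (relp m (hd P)) (tl P))"
      then obtain V where V: "V \<in> set (tl P)" "y = relp m (hd P) V" by auto
      then obtain i where i: "i < length (tl P)" "tl P ! i = V" by (metis in_set_conv_nth)
      have Vi: "V = P ! Suc i" using i nth_tl by metis
      have Si: "Suc i < n" using i PF(2) by simp
      have loV: "linear_order_on {0..<m} V" using PF(2,3) Si Vi by (metis nth_mem)
      have sub: "y \<subseteq> {..<m}\<times>{..<m}" using relp_sub[OF lo0 loV] V(2) PF(4) by simp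
      have "\<not> pcont y S \<rho> \<sigma>"
      proof
        assume "pcont y S \<rho> \<sigma>"
        then have "pcont (relp m (P!0) (P!Suc i)) S (rnk T1) (rnk T2)"
          using V(2) Vi PF(4) unfolding \<rho>_def \<sigma>_def by simp
        then have "contains_config n m P (S,[T1,T2])"
          using pcont_contains[OF el(1) _ Si lo1 lo2 finS] by simp
        then show False using el(2) by simp
      qed
      then show "y \<in> Q" unfolding Q_def AV_def using sub by simp
    qed
    moreover have "length (map (relp m (hd P)) (tl P)) = n-1" using PF(2) by simp
    ultimately show "z \<in> L \<times> LS" unfolding LS_def \<Phi>_def P(2) by simp
  qed
  have inj: "inj_on \<Phi> X"
  proof (rule inj_onI)
    fix P P' assume P: "P \<in> X" and P': "P' \<in> X" and e: "\<Phi> P = \<Phi> P'"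
    have PF: "P \<noteq> []" "\<forall>V\<in>set P. linear_order_on {0..<m} V" "hd P = P!0"
      using Pfacts[OF P] by auto
    have PF': "P' \<noteq> []" "\<forall>V\<in>set P'. linear_order_on {0..<m} V"
      using Pfacts[OF P'] by auto
    have h: "hd P = hd P'" using e unfolding \<Phi>_def by simp
    have mp: "map (relp m (hd P)) (tl P) = map (relp m (hd P)) (tl P')" using e h unfolding \<Phi>_def by simp
    have lo0: "linear_order_on {0..<m} (hd P)" using PF by simp
    have "inj_on (relp m (hd P)) (set (tl P) \<union> set (tl P'))"
    proof (rule inj_onI)
      fix V V' assume V: "V \<in> set (tl P) \<union> set (tl P')" "V' \<in> set (tl P) \<union> set (tl P')"
        and eV: "relp m (hd P) V = relp m (hd P) V'"
      have "linear_order_on {0..<m} V" "linear_order_on {0..<m} V'"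
        using V PF(2) PF'(2) list.set_sel(2)[OF PF(1)] list.set_sel(2)[OF PF'(1)] by blast+
      then show "V = V'" using relp_inj[OF lo0 _ _ eV] by blast
    qed
    then have "tl P = tl P'" using map_inj_on[OF mp] by blast
    then show "P = P'" using h PF(1) PF'(1) by (metis list.collapse)
  qed
  have "card X \<le> card (L \<times> LS)"
    using inj img by (rule card_inj_on_le) (use finL finQ in \<open>simp add: LS_def finite_lists_length_eq\<close>)
  also have "\<dots> = card L * card Q ^ (n-1)"
    unfolding LS_def by (simp add: card_cartesian_product card_lists_length_eq[OF finQ])
  also have "\<dots> \<le> fact m * ((2^(KK k*(k*k)))^m) ^ (n-1)"
    using card_lin_orders[of m] cQ unfolding L_def by (intro mult_le_mono power_mono) simp_all
  also have "\<dots> = fact m * (2^(KK k*(k*k)))^((n-1)*m)"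
    by (simp add: power_mult[symmetric] mult.commute)
  finally show ?thesis .
qed


theorem mainTheorem4:
  fixes k :: nat
  assumes "k \<ge> 2"
  shows "\<exists>c::real. \<forall>\<Gamma>.
     (\<forall>ST\<in>\<Gamma>. is_configuration ST) \<and>
     (\<exists>S T. (S, T) \<in> \<Gamma> \<and> card S = k \<and> length T = 2) \<longrightarrow>
     (\<forall>n m. n > 0 \<and> m > 0 \<longrightarrow>
        real (card (avoiding_elections n m \<Gamma>)) \<le> fact m * c ^ ((n - 1) * m))"
proof (intro exI[of _ "real (2^(KK k*(k*k)))"] allI impI)
  fix \<Gamma> :: "(nat set \<times> nat rel list) set" and n m :: nat
  assume H: "(\<forall>ST\<in>\<Gamma>. is_configuration ST) \<and> (\<exists>S T. (S, T) \<in> \<Gamma> \<and> card S = k \<and> length T = 2)"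
    and nm: "n > 0 \<and> m > 0"
  obtain S T where ST: "(S, T) \<in> \<Gamma>" "card S = k" "length T = 2" using H by blast
  obtain T1 T2 where T: "T = [T1, T2]" using ST(3)
    by (metis One_nat_def Suc_1 length_0_conv length_Suc_conv)
  have conf: "is_configuration (S, T)" using H ST(1) by blast
  have finS: "finite S" using conf unfolding is_configuration_def by simp
  have lo1: "linear_order_on S T1" and lo2: "linear_order_on S T2"
    using conf unfolding is_configuration_def T by simp_all
  have X: "\<forall>P\<in>avoiding_elections n m \<Gamma>. is_election n m P \<and> \<not> contains_config n m P (S,[T1,T2])"
    using ST(1) T unfolding avoiding_elections_def by blast
  have "card (avoiding_elections n m \<Gamma>) \<le> fact m * (2^(KK k*(k*k)))^((n-1)*m)"
    using count_elections[OF assms lo1 lo2 finS ST(2) _ _ X] nm by blast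
  then have "real (card (avoiding_elections n m \<Gamma>)) \<le> real (fact m * (2^(KK k*(k*k)))^((n-1)*m))"
    by (simp only: of_nat_le_iff)
  then show "real (card (avoiding_elections n m \<Gamma>)) \<le> fact m * (real (2^(KK k*(k*k)))) ^ ((n - 1) * m)"
    by (simp add: of_nat_mult of_nat_power)
qed

end
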